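(* In the setting below, let $i\neq j$, put $m=1-(\alpha_i|\alpha_j)$, fix a sign $\epsilon\in\{+,-\}$, and for $n\in\mathbb Z$ define the $\mathrm{End}(\mathcal F)$-valued formal series $$S_n(z_1,\dots,z_m)=\sum_{\sigma\in S_m}\sum_{r=0}^{m}(-1)^r\begin{bmatrix} m\\ r\end{bmatrix}X_i^{\epsilon}(z_{\sigma(1)})\cdots X_i^{\epsilon}(z_{\sigma(r)})\,X_j^{\epsilon}(n)\,X_i^{\epsilon}(z_{\sigma(r+1)})\cdots X_i^{\epsilon}(z_{\sigma(m)}).$$ Suppose there is an index $k$ with $(\alpha_k|\alpha_i)=0$ and $(\alpha_k|\alpha_j)\neq0$. If $S_n=0$ for some $n\in\mathbb Z$, then $S_n=0$ for every $n\in\mathbb Z$; equivalently the full relation $\sum_{\sigma\in S_m}\sum_{r=0}^{m}(-1)^r\begin{bmatrix} m\\ r\end{bmatrix}X_i^{\epsilon}(z_{\sigma(1)})\cdots X_i^{\epsilon}(z_{\sigma(r)})X_j^{\epsilon}(w)X_i^{\epsilon}(z_{\sigma(r+1)})\cdots X_i^{\epsilon}(z_{\sigma(m)})=0$ holds.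
   Context: Let $A=(a_{ij})_{i,j=1}^l$ be a symmetric generalized Cartan matrix ($a_{ii}=2$, $a_{ij}=a_{ji}\in\mathbb Z_{\le0}$ for $i\ne j$). Let $Q=\bigoplus_{i=1}^l\mathbb Z\alpha_i$ carry the symmetric bilinear form with $(\alpha_i|\alpha_j)=a_{ij}$. Fix $q\in\mathbb C^\times$, not a root of unity, and a square root $q^{1/2}$; write $[n]=\frac{q^n-q^{-n}}{q-q^{-1}}$, $[n]!=[1]\cdots[n]$, $\begin{bmatrix} m\\ r\end{bmatrix}=\frac{[m]!}{[r]![m-r]!}$. Fock space: $\mathcal F=S\otimes\mathbb C\{Q\}$. Here $S$ is the polynomial algebra in the indeterminates $a_i(-n)$ ($1\le i\le l$, $n\ge1$); $a_i(-n)$ acts on $S$ by multiplication and, for $n>0$, $a_i(n)$ acts as the derivation of $S$ with $a_i(n)\cdot a_j(-m)=\delta_{nm}\frac{[(\alpha_i|\alpha_j)n][n]}{n}$, so that $[a_i(m),a_j(n)]=\delta_{m+n,0}\frac{[(\alpha_i|\alpha_j)m][m]}{m}$ for $m,n\neq0$. $\mathbb C\{Q\}$ is the twisted group algebra with basis $e^\beta$ ($\beta\in Q$) and product $e^\alpha e^\beta=\varepsilon(\alpha,\beta)e^{\alpha+\beta}$, where $\varepsilon:Q\times Q\to\{\pm1\}$ is bimultiplicative with $\varepsilon(\alpha,\beta)\varepsilon(\beta,\alpha)^{-1}=(-1)^{(\alpha|\beta)}$, so $e^\alpha e^\beta=(-1)^{(\alpha|\beta)}e^\beta e^\alpha$.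 On $\mathcal F$, $e^\alpha$ acts by left multiplication on the second factor, $a_i(0)(u\otimes e^\beta)=(\alpha_i|\beta)\,u\otimes e^\beta$, and $z^{\pm a_i(0)}(u\otimes e^\beta)=z^{\pm(\alpha_i|\beta)}u\otimes e^\beta$. Vertex operators: with $E^{\pm}_{-}(i,z)=\exp\big(\pm\sum_{n\ge1}\frac{a_i(-n)}{[n]}q^{\mp n/2}z^n\big)$ and $E^{\pm}_{+}(i,z)=\exp\big(\mp\sum_{n\ge1}\frac{a_i(n)}{[n]}q^{\mp n/2}z^{-n}\big)$, set $X_i^{\pm}(z)=E^{\pm}_-(i,z)E^{\pm}_+(i,z)\,e^{\pm\alpha_i}z^{\pm a_i(0)}=\sum_{n\in\mathbb Z}X_i^{\pm}(n)z^{-n-1}$. The symmetric group $S_m$ permutes the variables $z_1,\dots,z_m$. *)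

theory Defs
  imports Complex_Main "HOL-Library.Poly_Mapping" "HOL-Computational_Algebra.Polynomial"
    "HOL-Combinatorics.Permutations"
begin

definition qint :: "complex \<Rightarrow> int \<Rightarrow> complex" where
  "qint q n = (q powi n - q powi (- n)) / (q - inverse q)"

definition qfact :: "complex \<Rightarrow> nat \<Rightarrow> complex" where
  "qfact q n = (\<Prod>k\<in>{1..n}. qint q (int k))"

definition qbinom :: "complex \<Rightarrow> nat \<Rightarrow> nat \<Rightarrow> complex" where
  "qbinom q m r = qfact q m / (qfact q r * qfact q (m - r))"

section \<open>Root lattice Q (indices 1..l), elements as integer coordinate vectors\<close>

type_synonym lat = "nat \<Rightarrow> int"

definition inQ :: "nat \<Rightarrow> lat \<Rightarrow> bool" where
  "inQ l \<beta> \<longleftrightarrow> (\<forall>k. k \<notin> {1..l} \<longrightarrow> \<beta> k = 0)"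

definition sroot :: "nat \<Rightarrow> lat" where
  "sroot i = (\<lambda>k. if k = i then 1 else 0)"

definition ladd :: "lat \<Rightarrow> lat \<Rightarrow> lat" where
  "ladd \<beta> \<gamma> = (\<lambda>k. \<beta> k + \<gamma> k)"

definition sscale :: "int \<Rightarrow> lat \<Rightarrow> lat" where
  "sscale s \<beta> = (\<lambda>k. s * \<beta> k)"

text \<open>The bilinear form (alpha_j | alpha_k) = A j k extended bilinearly.\<close>
definition form :: "nat \<Rightarrow> (nat \<Rightarrow> nat \<Rightarrow> int) \<Rightarrow> lat \<Rightarrow> lat \<Rightarrow> int" where
  "form l A \<beta> \<gamma> = (\<Sum>j\<in>{1..l}. \<Sum>k\<in>{1..l}. \<beta> j * A j k * \<gamma> k)"

definition sym_GCM :: "nat \<Rightarrow> (nat \<Rightarrow> nat \<Rightarrow> int) \<Rightarrow> bool" where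
  "sym_GCM l A \<longleftrightarrow> (\<forall>i\<in>{1..l}. A i i = 2) \<and>
     (\<forall>i\<in>{1..l}. \<forall>j\<in>{1..l}. i \<noteq> j \<longrightarrow> A i j = A j i \<and> A i j \<le> 0)"

definition cocycle :: "nat \<Rightarrow> (nat \<Rightarrow> nat \<Rightarrow> int) \<Rightarrow> (lat \<Rightarrow> lat \<Rightarrow> int) \<Rightarrow> bool" where
  "cocycle l A eps \<longleftrightarrow>
     (\<forall>\<alpha> \<beta>. inQ l \<alpha> \<longrightarrow> inQ l \<beta> \<longrightarrow> eps \<alpha> \<beta> \<in> {1, -1}) \<and>
     (\<forall>\<alpha> \<alpha>' \<beta>. inQ l \<alpha> \<longrightarrow> inQ l \<alpha>' \<longrightarrow> inQ l \<beta> \<longrightarrow>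
        eps (ladd \<alpha> \<alpha>') \<beta> = eps \<alpha> \<beta> * eps \<alpha>' \<beta>) \<and>
     (\<forall>\<alpha> \<beta> \<beta>'. inQ l \<alpha> \<longrightarrow> inQ l \<beta> \<longrightarrow> inQ l \<beta>' \<longrightarrow>
        eps \<alpha> (ladd \<beta> \<beta>') = eps \<alpha> \<beta> * eps \<alpha> \<beta>') \<and>
     (\<forall>\<alpha> \<beta>. inQ l \<alpha> \<longrightarrow> inQ l \<beta> \<longrightarrow>
        complex_of_int (eps \<alpha> \<beta>) / complex_of_int (eps \<beta> \<alpha>) = (-1) powi (form l A \<alpha> \<beta>))"

text \<open>The indeterminate a_j(-n) is the variable (j,n).\<close>
type_synonym mon = "(nat \<times> nat) \<Rightarrow>\<^sub>0 nat"
type_synonym S = "mon \<Rightarrow>\<^sub>0 complex"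
text \<open>A vector of F = S \<otimes> C{Q} is a finite sum  sum_beta u_beta \<otimes> e^beta.\<close>
type_synonym F = "lat \<Rightarrow>\<^sub>0 S"

definition smul :: "complex \<Rightarrow> S \<Rightarrow> S" where
  "smul c u = Poly_Mapping.map (\<lambda>x. c * x) u"

definition fscale :: "complex \<Rightarrow> F \<Rightarrow> F" where
  "fscale c v = Poly_Mapping.map (smul c) v"

definition var :: "nat \<Rightarrow> nat \<Rightarrow> S" where
  "var j n = Poly_Mapping.single (Poly_Mapping.single (j, n) 1) 1"

definition pderiv_var :: "nat \<times> nat \<Rightarrow> S \<Rightarrow> S" where
  "pderiv_var v f = (\<Sum>\<mu>\<in>Poly_Mapping.keys f.
     smul (Poly_Mapping.lookup f \<mu> * of_nat (Poly_Mapping.lookup (\<mu>::mon) v))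
          (Poly_Mapping.single (\<mu> - Poly_Mapping.single v 1) 1))"

text \<open>a_i(n), n > 0: the derivation with a_i(n) a_j(-m) = delta_nm [a_ij n][n]/n.\<close>
definition a_op :: "complex \<Rightarrow> nat \<Rightarrow> (nat \<Rightarrow> nat \<Rightarrow> int) \<Rightarrow> nat \<Rightarrow> nat \<Rightarrow> S \<Rightarrow> S" where
  "a_op q l A i n f = (\<Sum>j\<in>{1..l}.
     smul (qint q (A i j * int n) * qint q (int n) / of_nat n) (pderiv_var (j, n) f))"

definition wdeg :: "S \<Rightarrow> nat" where
  "wdeg u = (\<Sum>\<mu>\<in>Poly_Mapping.keys u. \<Sum>v\<in>Poly_Mapping.keys \<mu>. snd v * Poly_Mapping.lookup \<mu> v)"

text \<open>E^s_+(i,z) u, as a polynomial in w = z^(-1) with coefficients in S.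
  The exponent is Z = sum_n D_n w^n with D_n = -s q^(-s n/2)/[n] a_i(n); exp(Z) u =
  sum_p Z^p u / p!.  On u, D_n = 0 for n > wdeg u and Z^p u = 0 for p > wdeg u, so
  the truncation at B = wdeg u is exact.\<close>
definition Dop :: "complex \<Rightarrow> complex \<Rightarrow> nat \<Rightarrow> (nat \<Rightarrow> nat \<Rightarrow> int) \<Rightarrow> int \<Rightarrow> nat \<Rightarrow> nat \<Rightarrow> S \<Rightarrow> S" where
  "Dop q qh l A s i n f = smul (- of_int s * qh powi (- s * int n) / qint q (int n)) (a_op q l A i n f)"

definition Zop :: "complex \<Rightarrow> complex \<Rightarrow> nat \<Rightarrow> (nat \<Rightarrow> nat \<Rightarrow> int) \<Rightarrow> int \<Rightarrow> nat \<Rightarrow> nat \<Rightarrow> S poly \<Rightarrow> S poly" where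
  "Zop q qh l A s i B p = (\<Sum>n\<in>{1..B}. monom 1 n * map_poly (Dop q qh l A s i n) p)"

definition Eplus :: "complex \<Rightarrow> complex \<Rightarrow> nat \<Rightarrow> (nat \<Rightarrow> nat \<Rightarrow> int) \<Rightarrow> int \<Rightarrow> nat \<Rightarrow> S \<Rightarrow> S poly" where
  "Eplus q qh l A s i u = (let B = wdeg u in
     (\<Sum>p\<in>{0..B}. map_poly (smul (1 / fact p)) ((Zop q qh l A s i B ^^ p) [:u:])))"

text \<open>coefficient of z^k in E^s_-(i,z) = exp(Y), Y = sum_n s q^(-s n/2)/[n] a_i(-n) z^n;
  only the terms n <= k of Y and the powers p <= k contribute.\<close>
definition Ycut :: "complex \<Rightarrow> complex \<Rightarrow> int \<Rightarrow> nat \<Rightarrow> nat \<Rightarrow> S poly" where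
  "Ycut q qh s i k = (\<Sum>n\<in>{1..k}.
     monom (smul (of_int s * qh powi (- s * int n) / qint q (int n)) (var i n)) n)"

definition Mcoef :: "complex \<Rightarrow> complex \<Rightarrow> int \<Rightarrow> nat \<Rightarrow> int \<Rightarrow> S" where
  "Mcoef q qh s i k = (if k < 0 then 0 else
     (\<Sum>p\<in>{0..nat k}. smul (1 / fact p) (coeff (Ycut q qh s i (nat k) ^ p) (nat k))))"

text \<open>The mode X^s_i(n) of X^s_i(z) = sum_n X^s_i(n) z^(-n-1), acting on F:
  X^s_i(z)(u \<otimes> e^beta) = eps(s alpha_i, beta) z^(s(alpha_i|beta)) E_-(z) E_+(z) u \<otimes> e^(beta + s alpha_i).\<close>
definition Xmode :: "complex \<Rightarrow> complex \<Rightarrow> nat \<Rightarrow> (nat \<Rightarrow> nat \<Rightarrow> int) \<Rightarrow> (lat \<Rightarrow> lat \<Rightarrow> int)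
    \<Rightarrow> int \<Rightarrow> nat \<Rightarrow> int \<Rightarrow> F \<Rightarrow> F" where
  "Xmode q qh l A eps s i n v = (\<Sum>\<beta>\<in>Poly_Mapping.keys v.
     (let u = Poly_Mapping.lookup v \<beta>; E = Eplus q qh l A s i u; d = s * form l A (sroot i) \<beta> in
      Poly_Mapping.single (ladd \<beta> (sscale s (sroot i)))
        (smul (of_int (eps (sscale s (sroot i)) \<beta>))
          (\<Sum>k\<in>{0..Polynomial.degree E}. Mcoef q qh s i (int k - n - 1 - d) * coeff E k))))"

definition opprod :: "(F \<Rightarrow> F) list \<Rightarrow> F \<Rightarrow> F" where
  "opprod fs = foldr (\<circ>) fs id"

definition validF :: "nat \<Rightarrow> F \<Rightarrow> bool" where
  "validF l v \<longleftrightarrow> (\<forall>\<beta>\<in>Poly_Mapping.keys v. inQ l \<beta> \<and>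
     (\<forall>\<mu>\<in>Poly_Mapping.keys (Poly_Mapping.lookup v \<beta>). \<forall>x\<in>Poly_Mapping.keys \<mu>. fst x \<in> {1..l} \<and> snd x \<ge> 1))"

text \<open>Coefficient of z_1^(-n_1-1) ... z_m^(-n_m-1) of S_n(z_1,...,z_m), applied to v,
  with m = 1 - (alpha_i|alpha_j).\<close>
definition Scoef :: "complex \<Rightarrow> complex \<Rightarrow> nat \<Rightarrow> (nat \<Rightarrow> nat \<Rightarrow> int) \<Rightarrow> (lat \<Rightarrow> lat \<Rightarrow> int)
    \<Rightarrow> int \<Rightarrow> nat \<Rightarrow> nat \<Rightarrow> int \<Rightarrow> (nat \<Rightarrow> int) \<Rightarrow> F \<Rightarrow> F" where
  "Scoef q qh l A eps s i j n ns v = (let m = nat (1 - A i j); X = Xmode q qh l A eps s in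
     (\<Sum>\<sigma>\<in>{\<sigma>. \<sigma> permutes {1..m}}. \<Sum>r\<in>{0..m}.
        fscale ((-1) ^ r * qbinom q m r)
          (opprod (map (\<lambda>t. X i (ns (\<sigma> t))) [1..<r+1] @ [X j n] @
                   map (\<lambda>t. X i (ns (\<sigma> t))) [r+1..<m+1]) v)))"

text \<open>S_n = 0 as an End(F)-valued formal series: every coefficient vanishes on F.\<close>
definition S_zero :: "complex \<Rightarrow> complex \<Rightarrow> nat \<Rightarrow> (nat \<Rightarrow> nat \<Rightarrow> int) \<Rightarrow> (lat \<Rightarrow> lat \<Rightarrow> int)
    \<Rightarrow> int \<Rightarrow> nat \<Rightarrow> nat \<Rightarrow> int \<Rightarrow> bool" where
  "S_zero q qh l A eps s i j n \<longleftrightarrow>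
     (\<forall>ns v. validF l v \<longrightarrow> Scoef q qh l A eps s i j n ns v = 0)"

end

theory Submission
  imports Defs
begin


abbreviation lk where "lk \<equiv> Poly_Mapping.lookup"
abbreviation ks where "ks \<equiv> Poly_Mapping.keys"

abbreviation C :: "complex \<Rightarrow> S" where "C c \<equiv> Poly_Mapping.single 0 c"

lemma smul_conv: "smul c u = C c * u"
  unfolding smul_def by (metis mult_map_scale_conv_mult)

lemma lookup_map0: "f 0 = 0 \<Longrightarrow> lk (Poly_Mapping.map f p) k = f (lk p k)"
  by (simp add: Poly_Mapping.map.rep_eq when_def)

lemma lookup_C_mult: "lk (C c * u) \<mu> = c * lk u \<mu>"
  by (metis lookup_map0 mult_map_scale_conv_mult mult_zero_right)

definition ev :: "nat \<times> nat \<Rightarrow> mon" where "ev v = Poly_Mapping.single v 1"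

lemma pd_lookup: "lk (pderiv_var v f) \<mu> = of_nat (lk \<mu> v + 1) * lk f (\<mu> + ev v)"
proof -
  have eq: "pderiv_var v f = (\<Sum>\<nu>\<in>ks f. Poly_Mapping.single (\<nu> - ev v) (lk f \<nu> * of_nat (lk \<nu> v)))"
    unfolding pderiv_var_def smul_def ev_def by (simp)
  have "lk (pderiv_var v f) \<mu> = (\<Sum>\<nu>\<in>ks f. (if \<nu> = \<mu> + ev v then lk f \<nu> * of_nat (lk \<nu> v) else 0))"
    unfolding eq lookup_sum
  proof (intro sum.cong refl)
    fix \<nu> assume "\<nu> \<in> ks f"
    show "lk (Poly_Mapping.single (\<nu> - ev v) (lk f \<nu> * of_nat (lk \<nu> v))) \<mu> =
         (if \<nu> = \<mu> + ev v then lk f \<nu> * of_nat (lk \<nu> v) else 0)"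
    proof (cases "lk \<nu> v = 0")
      case True
      then show ?thesis by (auto simp: lookup_single when_def ev_def lookup_add)
    next
      case False
      have lm: "lk (a - b) x = lk a x - lk b x" for a b :: mon and x
        by (simp add: Poly_Mapping.minus_poly_mapping.rep_eq)
      have "(\<nu> - ev v = \<mu>) \<longleftrightarrow> (\<nu> = \<mu> + ev v)"
      proof
        assume h: "\<nu> - ev v = \<mu>"
        show "\<nu> = \<mu> + ev v"
        proof (rule poly_mapping_eqI)
          fix x
          have "lk \<nu> x - lk (ev v) x = lk \<mu> x" using h lm by metis
          then show "lk \<nu> x = lk (\<mu> + ev v) x" using False
            by (cases "x = v") (auto simp: lookup_add ev_def lookup_single)
        qed
      next
        assume h: "\<nu> = \<mu> + ev v"
        show "\<nu> - ev v = \<mu>"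
          by (rule poly_mapping_eqI) (simp add: h lm lookup_add)
      qed
      then show ?thesis by (auto simp: lookup_single when_def)
    qed
  qed
  also have "\<dots> = of_nat (lk \<mu> v + 1) * lk f (\<mu> + ev v)"
    by (auto simp: sum.delta lookup_add ev_def in_keys_iff mult.commute)
  finally show ?thesis .
qed

lemma lm_minus: "lk (a - b) x = lk a x - lk b x" for a b :: mon
  by (simp add: Poly_Mapping.minus_poly_mapping.rep_eq)

lemma lk_mult_ev: "lk (Poly_Mapping.single (ev w) 1 * f) \<mu> = (if 0 < lk \<mu> w then lk f (\<mu> - ev w) else 0)" for f :: S
proof -
  have "lk (Poly_Mapping.single (ev w) 1 * f) \<mu> = (\<Sum>q. lk f q when \<mu> = ev w + q)"
    unfolding lookup_mult by (simp add: lookup_single when_mult)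
  also have "\<dots> = (if 0 < lk \<mu> w then lk f (\<mu> - ev w) else 0)"
  proof (cases "0 < lk \<mu> w")
    case True
    have "(\<mu> = ev w + q) \<longleftrightarrow> (q = \<mu> - ev w)" for q
    proof
      assume "\<mu> = ev w + q" then show "q = \<mu> - ev w" by simp
    next
      assume h: "q = \<mu> - ev w"
      show "\<mu> = ev w + q"
        by (rule poly_mapping_eqI) (use True in \<open>auto simp: h lm_minus lookup_add ev_def lookup_single when_def\<close>)
    qed
    then show ?thesis using True by simp
  next
    case False
    have "\<mu> \<noteq> ev w + q" for q
    proof
      assume "\<mu> = ev w + q"
      then have "lk \<mu> w = 1 + lk q w" by (simp add: lookup_add ev_def)
      then show False using False by simp
    qed
    then show ?thesis using False by simp
  qed
  finally show ?thesis .
qed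


abbreviation V :: "nat \<Rightarrow> S" where "V k \<equiv> Poly_Mapping.single (ev (k,1)) 1"

lemma var_V: "var k 1 = V k" by (simp add: var_def ev_def)

lemma pd_add: "pderiv_var v (f + g) = pderiv_var v f + pderiv_var v g"
  by (rule poly_mapping_eqI) (simp add: pd_lookup lookup_add algebra_simps)

lemma pd_zero: "pderiv_var v 0 = 0"
  by (rule poly_mapping_eqI) (simp add: pd_lookup)

lemma pd_C: "pderiv_var v (C c * f) = C c * pderiv_var v f"
  by (rule poly_mapping_eqI) (simp add: pd_lookup lookup_C_mult mult.left_commute)

lemma pd_V: "pderiv_var v (V k * f) = (if v = (k,1) then f else 0) + V k * pderiv_var v f"
proof (rule poly_mapping_eqI)
  fix \<mu>
  show "lk (pderiv_var v (V k * f)) \<mu> = lk ((if v = (k,1) then f else 0) + V k * pderiv_var v f) \<mu>"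
  proof (cases "v = (k,1)")
    case True
    have e1: "\<mu> + ev v - ev v = \<mu>" by simp
    have e2: "\<mu> - ev v + ev v = \<mu>" if "0 < lk \<mu> v"
      by (rule poly_mapping_eqI) (use that in \<open>auto simp: lm_minus lookup_add ev_def lookup_single when_def\<close>)
    have e3: "lk (\<mu> - ev v) v = lk \<mu> v - 1"
      by (simp add: lm_minus ev_def)
    have Vv: "V k = Poly_Mapping.single (ev v) 1" using True by simp
    have e4: "0 < lk (\<mu> + ev v) v" by (simp add: lookup_add ev_def)
    have "lk (pderiv_var v (V k * f)) \<mu> = of_nat (lk \<mu> v + 1) * lk f \<mu>"
      by (simp only: Vv pd_lookup lk_mult_ev e4 e1 if_True)
    moreover have "lk ((if v = (k,1) then f else 0) + V k * pderiv_var v f) \<mu> = lk f \<mu> + (if 0 < lk \<mu> v then of_nat (lk \<mu> v) * lk f \<mu> else 0)"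
      by (simp only: Vv True[symmetric] lookup_add lk_mult_ev pd_lookup e3 if_True refl) (auto simp: e2)
    ultimately show ?thesis by (auto simp: algebra_simps)
  next
    case False
    have e0: "lk (\<mu> + ev v) (k,1) = lk \<mu> (k,1)" using False by (simp add: lookup_add ev_def lookup_single)
    have e2: "\<mu> + ev v - ev (k,1) = \<mu> - ev (k,1) + ev v" if "0 < lk \<mu> (k,1)"
      by (rule poly_mapping_eqI) (use that False in \<open>auto simp: lm_minus lookup_add ev_def lookup_single when_def\<close>)
    have e3: "lk (\<mu> - ev (k,1)) v = lk \<mu> v"
      using False by (simp add: lm_minus ev_def lookup_single)
    show ?thesis
    proof (cases "0 < lk \<mu> (k,1)")
      case True
      then show ?thesis using False
        by (simp only: pd_lookup lk_mult_ev e0 e2 e3 if_True if_False add_0 lookup_zero lookup_add) simp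
    next
      case F2: False
      then show ?thesis using False
        by (simp only: pd_lookup lk_mult_ev e0 if_True if_False add_0 lookup_zero mult_zero_right lookup_add) (simp add: ev_def lookup_single)
    qed
  qed
qed



lemma C_mult_C: "C a * C b = C (a * b)" by (simp add: mult_single)
lemma C_add: "C a + C b = C (a + b)" by (simp add: single_add)

lemma aop_add: "a_op q l A i n (f + g) = a_op q l A i n f + a_op q l A i n g"
  by (simp add: a_op_def pd_add smul_conv distrib_left sum.distrib)

lemma aop_zero: "a_op q l A i n 0 = 0"
  by (simp add: a_op_def pd_zero smul_conv)

lemma aop_C: "a_op q l A i n (C c * f) = C c * a_op q l A i n f"
  by (simp add: a_op_def pd_C smul_conv sum_distrib_left mult.left_commute)

lemma aop_V:
  assumes "k \<in> {1..l}"
  shows "a_op q l A i n (V k * f) = V k * a_op q l A i n f +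
     (if n = 1 then C (qint q (A i k * int n) * qint q (int n) / of_nat n) * f else 0)"
proof -
  define cf where "cf j = C (qint q (A i j * int n) * qint q (int n) / of_nat n)" for j
  have s1: "cf j * pderiv_var (j,n) (V k * f) = (if j = k \<and> n = 1 then cf j * f else 0) + V k * (cf j * pderiv_var (j,n) f)" for j
    unfolding pd_V by (auto simp: distrib_left mult.left_commute)
  have "a_op q l A i n (V k * f) = (\<Sum>j\<in>{1..l}. cf j * pderiv_var (j,n) (V k * f))"
    by (simp add: a_op_def smul_conv cf_def)
  also have "\<dots> = (\<Sum>j\<in>{1..l}. (if j = k \<and> n = 1 then cf j * f else 0)) + V k * (\<Sum>j\<in>{1..l}. cf j * pderiv_var (j,n) f)"
    unfolding s1 sum.distrib sum_distrib_left ..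
  also have "(\<Sum>j\<in>{1..l}. cf j * pderiv_var (j,n) f) = a_op q l A i n f"
    by (simp add: a_op_def smul_conv cf_def)
  also have "(\<Sum>j\<in>{1..l}. (if j = k \<and> n = 1 then cf j * f else 0)) = (if n = 1 then cf k * f else 0)"
    using assms by (cases "n = 1") (simp_all add: sum.delta)
  finally show ?thesis by (simp add: add.commute cf_def)
qed

definition dcoef :: "complex \<Rightarrow> complex \<Rightarrow> (nat \<Rightarrow> nat \<Rightarrow> int) \<Rightarrow> int \<Rightarrow> nat \<Rightarrow> nat \<Rightarrow> complex" where
  "dcoef q qh A s a k = (- of_int s * qh powi (- s * int 1) / qint q (int 1)) *
      (qint q (A a k * int 1) * qint q (int 1) / of_nat 1)"

lemma Dop_add: "Dop q qh l A s i n (f + g) = Dop q qh l A s i n f + Dop q qh l A s i n g"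
  by (simp add: Dop_def aop_add smul_conv distrib_left)

lemma Dop_zero: "Dop q qh l A s i n 0 = 0"
  by (simp add: Dop_def aop_zero smul_conv)

lemma Dop_C: "Dop q qh l A s i n (C c * f) = C c * Dop q qh l A s i n f"
  by (simp add: Dop_def aop_C smul_conv mult.left_commute)

lemma Dop_V:
  assumes "k \<in> {1..l}"
  shows "Dop q qh l A s i n (V k * f) = V k * Dop q qh l A s i n f +
     (if n = 1 then C (dcoef q qh A s i k) * f else 0)"
proof -
  define kp where "kp = C (- of_int s * qh powi (- s * int n) / qint q (int n))"
  have "Dop q qh l A s i n (V k * f) = kp * a_op q l A i n (V k * f)"
    by (simp add: Dop_def smul_conv kp_def)
  also have "\<dots> = V k * (kp * a_op q l A i n f) + (if n = 1 then kp * C (qint q (A i k * int n) * qint q (int n) / of_nat n) * f else 0)"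
    unfolding aop_V[OF assms] by (simp add: distrib_left mult.left_commute mult.assoc)
  also have "kp * a_op q l A i n f = Dop q qh l A s i n f"
    by (simp add: Dop_def smul_conv kp_def)
  also have "(if n = 1 then kp * C (qint q (A i k * int n) * qint q (int n) / of_nat n) * f else 0)
      = (if n = 1 then C (dcoef q qh A s i k) * f else 0)"
    by (cases "n = 1") (simp_all only: kp_def C_mult_C dcoef_def if_True if_False)
  finally show ?thesis .
qed



definition wt :: "mon \<Rightarrow> nat" where "wt \<mu> = (\<Sum>x\<in>ks \<mu>. snd x * lk \<mu> x)"

definition wb :: "nat \<Rightarrow> S \<Rightarrow> bool" where "wb W f \<longleftrightarrow> (\<forall>\<mu>\<in>ks f. wt \<mu> \<le> W)"

lemma wt_sup: "finite K \<Longrightarrow> ks \<mu> \<subseteq> K \<Longrightarrow> wt \<mu> = (\<Sum>x\<in>K. snd x * lk \<mu> x)"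
  unfolding wt_def by (rule sum.mono_neutral_left) (auto simp: in_keys_iff)

lemma wt_add: "wt (a + b) = wt a + wt b"
proof -
  let ?K = "ks a \<union> ks b"
  have "wt (a + b) = (\<Sum>x\<in>?K. snd x * lk (a + b) x)"
    by (rule wt_sup) (use keys_add[of a b] in auto)
  also have "\<dots> = (\<Sum>x\<in>?K. snd x * lk a x) + (\<Sum>x\<in>?K. snd x * lk b x)"
    by (simp add: lookup_add distrib_left sum.distrib)
  also have "\<dots> = wt a + wt b"
    by (simp add: wt_sup[of ?K a] wt_sup[of ?K b])
  finally show ?thesis .
qed

lemma wt_ev: "wt (ev v) = snd v"
  by (simp add: wt_def ev_def)

lemma wb_mono: "wb W f \<Longrightarrow> W \<le> W' \<Longrightarrow> wb W' f"
  by (auto simp: wb_def)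

lemma wb_zero[simp]: "wb W 0"
  by (simp add: wb_def)

lemma wb_add: "wb W f \<Longrightarrow> wb W g \<Longrightarrow> wb W (f + g)"
  unfolding wb_def using keys_add[of f g] by blast

lemma keys_C_mult: "ks (C c * f) \<subseteq> ks f"
  by (auto simp: in_keys_iff lookup_C_mult)

lemma wb_C: "wb W f \<Longrightarrow> wb W (C c * f)"
  unfolding wb_def using keys_C_mult[of c f] by blast

lemma wb_sum: "(\<And>x. x \<in> X \<Longrightarrow> wb W (g x)) \<Longrightarrow> wb W (sum g X)"
  by (induction X rule: infinite_finite_induct) (auto intro: wb_add)

lemma pd_big: "wb W f \<Longrightarrow> W < snd v \<Longrightarrow> pderiv_var v f = 0"
proof (rule poly_mapping_eqI)
  fix \<mu> assume "wb W f" "W < snd v"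
  have "wt (\<mu> + ev v) > W" using \<open>W < snd v\<close> by (simp add: wt_add wt_ev)
  then have "lk f (\<mu> + ev v) = 0" using \<open>wb W f\<close> unfolding wb_def by (meson in_keys_iff not_le)
  then show "lk (pderiv_var v f) \<mu> = lk 0 \<mu>" by (simp add: pd_lookup)
qed

lemma pd_wb: "wb W f \<Longrightarrow> wb (W - snd v) (pderiv_var v f)"
  unfolding wb_def
proof
  fix \<mu> assume h: "\<forall>\<mu>\<in>ks f. wt \<mu> \<le> W" and "\<mu> \<in> ks (pderiv_var v f)"
  then have "lk f (\<mu> + ev v) \<noteq> 0" unfolding in_keys_iff pd_lookup by simp
  then have "wt (\<mu> + ev v) \<le> W" using h by (simp add: in_keys_iff)
  then show "wt \<mu> \<le> W - snd v" by (simp add: wt_add wt_ev)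
qed

lemma Dop_big: "wb W f \<Longrightarrow> W < n \<Longrightarrow> Dop q qh l A s i n f = 0"
proof -
  assume a: "wb W f" "W < n"
  have "pderiv_var (j,n) f = 0" for j using pd_big[OF a(1), of "(j,n)"] a(2) by simp
  then show ?thesis unfolding Dop_def a_op_def smul_conv by simp
qed

lemma Dop_wb: "wb W f \<Longrightarrow> wb (W - n) (Dop q qh l A s i n f)"
proof -
  assume a: "wb W f"
  have "wb (W - n) (pderiv_var (j,n) f)" for j using pd_wb[OF a, of "(j,n)"] by simp
  then show ?thesis unfolding Dop_def a_op_def smul_conv by (intro wb_C wb_sum) 
qed

lemma wb_V: "wb W f \<Longrightarrow> wb (W + 1) (V k * f)"
  unfolding wb_def
proof
  fix \<mu> assume h: "\<forall>\<mu>\<in>ks f. wt \<mu> \<le> W" and m: "\<mu> \<in> ks (V k * f)"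
  have "ks (V k * f) \<subseteq> {a + b |a b. a \<in> ks (V k) \<and> b \<in> ks f}" by (rule keys_mult)
  then obtain b where b: "b \<in> ks f" and mu: "\<mu> = ev (k,1) + b" using m by auto
  have "wt \<mu> = 1 + wt b" unfolding mu wt_add wt_ev by simp
  then show "wt \<mu> \<le> W + 1" using h b by simp
qed

lemma wdeg_wt: "wdeg u = (\<Sum>\<mu>\<in>ks u. wt \<mu>)"
  unfolding wdeg_def wt_def ..

lemma wb_wdeg: "wb (wdeg u) u"
  unfolding wb_def wdeg_wt
proof
  fix \<mu> assume "\<mu> \<in> ks u"
  then show "wt \<mu> \<le> (\<Sum>\<mu>\<in>ks u. wt \<mu>)" by (intro member_le_sum) simp_all
qed



definition PW :: "nat \<Rightarrow> S poly \<Rightarrow> bool" where "PW W P \<longleftrightarrow> (\<forall>t. wb W (coeff P t))"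

lemma PW_mono: "PW W P \<Longrightarrow> W \<le> W' \<Longrightarrow> PW W' P"
  unfolding PW_def using wb_mono by blast

lemma PW_const: "wb W u \<Longrightarrow> PW W [:u:]"
  unfolding PW_def by (simp add: coeff_pCons split: nat.split)

lemma map_smul: "map_poly (smul c) P = smult (C c) P"
  by (simp add: smult_conv_map_poly smul_conv[abs_def])

locale fk =
  fixes q qh :: complex and l :: nat and A :: "nat \<Rightarrow> nat \<Rightarrow> int" and s :: int and a :: nat
begin

abbreviation "D \<equiv> Dop q qh l A s a"
abbreviation "Z \<equiv> Zop q qh l A s a"

lemma Z_coeff: "coeff (Z B P) t = (\<Sum>n\<in>{1..B}. if n \<le> t then D n (coeff P (t - n)) else 0)"
  unfolding Zop_def coeff_sum
  by (intro sum.cong refl) (auto simp: coeff_monom_mult coeff_map_poly Dop_zero)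

lemma Z_add: "Z B (P + Q) = Z B P + Z B Q"
  by (rule poly_eqI) (simp add: Z_coeff Dop_add sum.distrib[symmetric] if_distrib cong: if_cong)

lemma Z_0: "Z B 0 = 0"
  by (rule poly_eqI) (simp add: Z_coeff Dop_zero cong: if_cong)

lemma Z_monomC: "Z B (monom (C c) m * P) = monom (C c) m * Z B P"
proof (rule poly_eqI)
  fix t
  show "coeff (Z B (monom (C c) m * P)) t = coeff (monom (C c) m * Z B P) t"
  proof (cases "t < m")
    case True
    then show ?thesis unfolding Z_coeff coeff_monom_mult
      by (auto simp: Dop_zero intro!: sum.neutral cong: if_cong)
  next
    case False
    then show ?thesis unfolding Z_coeff coeff_monom_mult
      by (auto simp: Dop_C Dop_zero sum_distrib_left diff_diff_add add.commute intro!: sum.cong cong: if_cong)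
  qed
qed

lemma Z_smultC: "Z B (smult (C c) P) = smult (C c) (Z B P)"
  using Z_monomC[where c=c and m=0 and B=B and P=P] by (metis monom_0 pCons_0_0 mult_pCons_left mult_zero_left add_0_right)

lemma Z_PW: "PW W P \<Longrightarrow> PW (W - 1) (Z B P)"
  unfolding PW_def Z_coeff
proof (intro allI wb_sum)
  fix t n assume h: "\<forall>t. wb W (coeff P t)" and n: "n \<in> {1..B}"
  show "wb (W - 1) (if n \<le> t then D n (coeff P (t - n)) else 0)"
    using Dop_wb[OF h[rule_format, of "t - n"], where q=q and qh=qh and l=l and A=A and s=s and i=a and n=n] n
    by (auto intro: wb_mono)
qed

lemma Z_W0: "PW 0 P \<Longrightarrow> Z B P = 0"
proof (rule poly_eqI)
  fix t assume "PW 0 P"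
  then have "D n (coeff P (t - n)) = 0" if "n \<in> {1..B}" for n
    using that by (intro Dop_big[of 0]) (auto simp: PW_def)
  then show "coeff (Z B P) t = coeff 0 t" unfolding Z_coeff by (simp cong: if_cong)
qed

lemma Z_B: "PW W P \<Longrightarrow> W \<le> B \<Longrightarrow> Z B P = Z W P"
proof (rule poly_eqI)
  fix t assume P: "PW W P" and "W \<le> B"
  have "(\<Sum>n\<in>{1..B}. if n \<le> t then D n (coeff P (t - n)) else 0) =
        (\<Sum>n\<in>{1..W}. if n \<le> t then D n (coeff P (t - n)) else 0)"
  proof (rule sum.mono_neutral_right)
    show "\<forall>n\<in>{1..B} - {1..W}. (if n \<le> t then D n (coeff P (t - n)) else 0) = 0"
      using P by (auto simp: PW_def intro!: Dop_big[of W])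
  qed (use \<open>W \<le> B\<close> in auto)
  then show "coeff (Z B P) t = coeff (Z W P) t" unfolding Z_coeff .
qed

lemma Z_V:
  assumes "k \<in> {1..l}" "1 \<le> B"
  shows "Z B (smult (V k) P) = smult (V k) (Z B P) + monom (C (dcoef q qh A s a k)) 1 * P"
proof (rule poly_eqI)
  fix t
  have "coeff (Z B (smult (V k) P)) t =
     (\<Sum>n\<in>{1..B}. (if n \<le> t then V k * D n (coeff P (t - n)) else 0) +
        (if n = 1 \<and> 1 \<le> t then C (dcoef q qh A s a k) * coeff P (t - 1) else 0))"
    unfolding Z_coeff coeff_smult Dop_V[OF assms(1)] by (intro sum.cong refl) auto
  also have "\<dots> = V k * coeff (Z B P) t + (if 1 \<le> t then C (dcoef q qh A s a k) * coeff P (t - 1) else 0)"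
    unfolding sum.distrib Z_coeff sum_distrib_left
    using assms(2) by (simp add: if_distrib sum.delta cong: if_cong)
  also have "\<dots> = coeff (smult (V k) (Z B P) + monom (C (dcoef q qh A s a k)) 1 * P) t"
    by (simp add: coeff_monom_mult)
  finally show "coeff (Z B (smult (V k) P)) t = coeff (smult (V k) (Z B P) + monom (C (dcoef q qh A s a k)) 1 * P) t" .
qed

end



lemma wb_min: "wb W u \<Longrightarrow> wb W' u \<Longrightarrow> wb (min W W') u"
  by (auto simp: wb_def)

lemma C_0: "C 0 = 0" by simp

lemma smult_sumR: "smult c (\<Sum>x\<in>X. f x) = (\<Sum>x\<in>X. smult c (f x))"
  by (induction X rule: infinite_finite_induct) (simp_all add: smult_add_right)

context fk begin

lemma it_add: "(Z B ^^ p) (P + Q) = (Z B ^^ p) P + (Z B ^^ p) Q"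
  by (induction p) (simp_all add: Z_add)

lemma it_0: "(Z B ^^ p) 0 = 0"
  by (induction p) (simp_all add: Z_0)

lemma it_monomC: "(Z B ^^ p) (monom (C c) m * P) = monom (C c) m * (Z B ^^ p) P"
  by (induction p) (simp_all add: Z_monomC)

lemma it_smultC: "(Z B ^^ p) (smult (C c) P) = smult (C c) ((Z B ^^ p) P)"
  by (induction p) (simp_all add: Z_smultC)

lemma it_PW: "PW W P \<Longrightarrow> PW (W - p) ((Z B ^^ p) P)"
proof (induction p)
  case 0 then show ?case by simp
next
  case (Suc p)
  then have "PW (W - p - 1) (Z B ((Z B ^^ p) P))" by (intro Z_PW) simp
  then show ?case by simp
qed

lemma it_Suc: "(Z B ^^ Suc p) P = (Z B ^^ p) (Z B P)"
  by (metis comp_apply funpow_Suc_right)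

lemma it_vanish: "PW W P \<Longrightarrow> W < p \<Longrightarrow> (Z B ^^ p) P = 0"
proof (induction p arbitrary: W P)
  case 0 then show ?case by simp
next
  case (Suc p)
  show ?case
  proof (cases "W = 0")
    case True
    then have "Z B P = 0" using Z_W0 Suc.prems(1) by blast
    then show ?thesis unfolding it_Suc by (simp only: it_0)
  next
    case False
    have "PW (W - 1) (Z B P)" using Suc.prems(1) by (rule Z_PW)
    moreover have "W - 1 < p" using False Suc.prems(2) by simp
    ultimately show ?thesis unfolding it_Suc by (rule Suc.IH)
  qed
qed

lemma it_B: "PW W P \<Longrightarrow> W \<le> B \<Longrightarrow> (Z B ^^ p) P = (Z W ^^ p) P"
proof (induction p arbitrary: P)
  case 0 then show ?case by simp
next
  case (Suc p)
  have "(Z B ^^ Suc p) P = (Z B ^^ p) (Z B P)" by (rule it_Suc)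
  also have "Z B P = Z W P" using Z_B Suc.prems by blast
  also have "(Z B ^^ p) (Z W P) = (Z W ^^ p) (Z W P)"
  proof (rule Suc.IH)
    show "PW W (Z W P)" using Z_PW[OF Suc.prems(1)] by (rule PW_mono) simp
  qed (rule Suc.prems(2))
  also have "(Z W ^^ p) (Z W P) = (Z W ^^ Suc p) P" by (rule it_Suc[symmetric])
  finally show ?case .
qed

lemma it_V:
  assumes "k \<in> {1..l}" "1 \<le> B"
  shows "(Z B ^^ p) (smult (V k) P) = smult (V k) ((Z B ^^ p) P) +
           monom (C (of_nat p * dcoef q qh A s a k)) 1 * (Z B ^^ (p - 1)) P"
proof (induction p)
  case 0 then show ?case by simp
next
  case (Suc p)
  let ?d = "dcoef q qh A s a k"
  have "(Z B ^^ Suc p) (smult (V k) P) = Z B ((Z B ^^ p) (smult (V k) P))" by simp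
  also have "\<dots> = Z B (smult (V k) ((Z B ^^ p) P)) + monom (C (of_nat p * ?d)) 1 * Z B ((Z B ^^ (p - 1)) P)"
    unfolding Suc.IH Z_add Z_monomC ..
  also have "\<dots> = smult (V k) ((Z B ^^ Suc p) P) + (monom (C ?d) 1 * (Z B ^^ p) P
       + monom (C (of_nat p * ?d)) 1 * Z B ((Z B ^^ (p - 1)) P))"
    unfolding Z_V[OF assms] by (simp add: add.assoc)
  also have "monom (C (of_nat p * ?d)) 1 * Z B ((Z B ^^ (p - 1)) P) = monom (C (of_nat p * ?d)) 1 * (Z B ^^ p) P"
    by (cases p) simp_all
  also have "monom (C ?d) 1 * (Z B ^^ p) P + monom (C (of_nat p * ?d)) 1 * (Z B ^^ p) P =
      (monom (C ?d) 1 + monom (C (of_nat p * ?d)) 1) * (Z B ^^ p) P"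
    by (simp only: distrib_right)
  also have "monom (C ?d) 1 + monom (C (of_nat p * ?d)) 1 = monom (C (of_nat (Suc p) * ?d)) 1"
    by (simp only: add_monom C_add) (simp add: algebra_simps)
  also have "(Z B ^^ p) P = (Z B ^^ (Suc p - 1)) P" by simp
  finally show ?case .
qed

definition ES :: "nat \<Rightarrow> nat \<Rightarrow> S \<Rightarrow> S poly" where
  "ES B N u = (\<Sum>p<N. smult (C (1 / fact p)) ((Z B ^^ p) [:u:]))"

lemma Eplus_ES: "Eplus q qh l A s a u = ES (wdeg u) (Suc (wdeg u)) u"
  unfolding Eplus_def Let_def ES_def map_smul
  by (simp add: atLeast0AtMost lessThan_Suc_atMost)

lemma ES_trunc:
  assumes "wb W u" "W \<le> B" "W < N"
  shows "ES B N u = ES W (Suc W) u"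
proof -
  have P: "PW W [:u:]" using assms(1) by (rule PW_const)
  have "ES B N u = (\<Sum>p<N. smult (C (1 / fact p)) ((Z W ^^ p) [:u:]))"
    unfolding ES_def using it_B[OF P assms(2)] by simp
  also have "\<dots> = (\<Sum>p<Suc W. smult (C (1 / fact p)) ((Z W ^^ p) [:u:]))"
  proof (rule sum.mono_neutral_right)
    show "\<forall>p\<in>{..<N} - {..<Suc W}. smult (C (1 / fact p)) ((Z W ^^ p) [:u:]) = 0"
      using it_vanish[OF P] by auto
  qed (use assms(3) in auto)
  finally show ?thesis unfolding ES_def .
qed

lemma Eplus_gen:
  assumes "wb W u" "W \<le> B" "W < N"
  shows "Eplus q qh l A s a u = ES B N u"
proof -
  let ?W = "min W (wdeg u)"
  have w: "wb ?W u" using assms(1) wb_wdeg by (rule wb_min)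
  have "ES B N u = ES ?W (Suc ?W) u" using w assms by (intro ES_trunc) auto
  moreover have "ES (wdeg u) (Suc (wdeg u)) u = ES ?W (Suc ?W) u" using w by (intro ES_trunc) auto
  ultimately show ?thesis unfolding Eplus_ES by simp
qed

lemma ES_add: "ES B N (u + w) = ES B N u + ES B N w"
proof -
  have "[:u + w:] = [:u:] + [:w:]" by simp
  then show ?thesis unfolding ES_def by (simp only: it_add sum.distrib smult_add_right)
qed

lemma ES_C: "ES B N (C c * u) = smult (C c) (ES B N u)"
proof -
  have "[:C c * u:] = smult (C c) [:u:]" by simp
  then show ?thesis unfolding ES_def by (simp only: it_smultC smult_sumR smult_smult mult.commute)
qed

lemma Eplus_add: "Eplus q qh l A s a (u + w) = Eplus q qh l A s a u + Eplus q qh l A s a w"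
proof -
  let ?W = "wdeg u + wdeg w + wdeg (u + w)"
  have "wb ?W u" "wb ?W w" "wb ?W (u + w)" by (rule wb_mono[OF wb_wdeg]; simp)+
  then show ?thesis using Eplus_gen[of ?W _ ?W "Suc ?W"] by (simp add: ES_add)
qed

lemma Eplus_C: "Eplus q qh l A s a (C c * u) = smult (C c) (Eplus q qh l A s a u)"
proof -
  let ?W = "wdeg u + wdeg (C c * u)"
  have "wb ?W u" "wb ?W (C c * u)" by (rule wb_mono[OF wb_wdeg]; simp)+
  then show ?thesis using Eplus_gen[of ?W _ ?W "Suc ?W"] by (simp add: ES_C)
qed

lemma Eplus_0: "Eplus q qh l A s a 0 = 0"
  using Eplus_C[of 0 0] by simp

lemma Eplus_V:
  assumes "k \<in> {1..l}"
  shows "Eplus q qh l A s a (V k * u) = smult (V k) (Eplus q qh l A s a u) +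
    monom (C (dcoef q qh A s a k)) 1 * Eplus q qh l A s a u"
proof -
  let ?d = "dcoef q qh A s a k"
  let ?B = "wdeg u + 1"
  have w1: "wb ?B (V k * u)" using wb_V[OF wb_wdeg] .
  have w0: "wb (wdeg u) u" by (rule wb_wdeg)
  have E1: "Eplus q qh l A s a (V k * u) = ES ?B (Suc ?B) (V k * u)" using Eplus_gen[OF w1] by simp
  have E2: "Eplus q qh l A s a u = ES ?B (Suc ?B) u" using Eplus_gen[OF w0] by simp
  have E3: "Eplus q qh l A s a u = ES ?B ?B u" using Eplus_gen[OF w0] by simp
  have B1: "1 \<le> ?B" by simp
  have "ES ?B (Suc ?B) (V k * u) = (\<Sum>p<Suc ?B. smult (C (1 / fact p)) (smult (V k) ((Z ?B ^^ p) [:u:]) +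
           monom (C (of_nat p * ?d)) 1 * (Z ?B ^^ (p - 1)) [:u:]))"
    unfolding ES_def
    by (simp only: it_V[OF assms B1, symmetric] smult_pCons mult_zero_right smult_0_right)
  also have "\<dots> = smult (V k) (ES ?B (Suc ?B) u) +
      (\<Sum>p<Suc ?B. smult (C (1 / fact p)) (monom (C (of_nat p * ?d)) 1 * (Z ?B ^^ (p - 1)) [:u:]))"
    unfolding ES_def by (simp only: smult_add_right sum.distrib smult_sumR smult_smult mult.commute)
  also have "(\<Sum>p<Suc ?B. smult (C (1 / fact p)) (monom (C (of_nat p * ?d)) 1 * (Z ?B ^^ (p - 1)) [:u:]))
     = (\<Sum>p<?B. smult (C (1 / fact (Suc p))) (monom (C (of_nat (Suc p) * ?d)) 1 * (Z ?B ^^ p) [:u:]))"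
    by (subst sum.lessThan_Suc_shift) simp
  also have "\<dots> = monom (C ?d) 1 * ES ?B ?B u"
  proof -
    have "smult (C (1 / fact (Suc p))) (monom (C (of_nat (Suc p) * ?d)) 1 * (Z ?B ^^ p) [:u:]) =
          monom (C ?d) 1 * smult (C (1 / fact p)) ((Z ?B ^^ p) [:u:])" for p
    proof -
      have eq: "C (1 / fact (Suc p)) * C (of_nat (Suc p) * ?d) = C (1 / fact p) * C ?d"
        unfolding C_mult_C by (simp add: field_simps del: of_nat_Suc)
      show ?thesis by (simp only: smult_monom_mult mult_smult_right eq)
    qed
    then show ?thesis unfolding ES_def sum_distrib_left by simp
  qed
  finally show ?thesis using E1 E2 E3 by simp
qed

end



definition GG :: "(int \<Rightarrow> S) \<Rightarrow> int \<Rightarrow> int \<Rightarrow> S poly \<Rightarrow> S" where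
  "GG M n d E = (\<Sum>k\<in>{0..degree E}. M (int k - n - 1 - d) * coeff E k)"

lemma GG_N: "degree E \<le> N \<Longrightarrow> GG M n d E = (\<Sum>k\<in>{0..N}. M (int k - n - 1 - d) * coeff E k)"
  unfolding GG_def by (rule sum.mono_neutral_left) (auto simp: coeff_eq_0)

lemma GG_add: "GG M n d (E1 + E2) = GG M n d E1 + GG M n d E2"
proof -
  let ?N = "degree E1 + degree E2"
  have "degree (E1 + E2) \<le> ?N" by (intro degree_add_le) auto
  then show ?thesis
    using GG_N[of E1 ?N] GG_N[of E2 ?N] GG_N[of "E1 + E2" ?N]
    by (simp add: distrib_left sum.distrib)
qed

lemma GG_smult: "GG M n d (smult c E) = c * GG M n d E"
proof -
  have "degree (smult c E) \<le> degree E" by (rule degree_smult_le)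
  then show ?thesis using GG_N[of "smult c E" "degree E"]
    by (simp add: GG_def sum_distrib_left mult.left_commute)
qed

lemma GG_monom1: "GG M n d (monom c 1 * E) = c * GG M (n - 1) d E"
proof -
  let ?N = "Suc (degree E)"
  have "degree (monom c 1 * E) \<le> ?N"
    using degree_mult_le[of "monom c 1" E] degree_monom_le[of c 1] by simp
  then have "GG M n d (monom c 1 * E) = (\<Sum>k\<in>{0..?N}. M (int k - n - 1 - d) * coeff (monom c 1 * E) k)"
    by (rule GG_N)
  also have "\<dots> = (\<Sum>k\<in>{0..degree E}. M (int (Suc k) - n - 1 - d) * coeff (monom c 1 * E) (Suc k))"
    by (subst sum.atLeast0_atMost_Suc_shift) (simp add: coeff_monom_mult)
  also have "\<dots> = (\<Sum>k\<in>{0..degree E}. c * (M (int k - (n - 1) - 1 - d) * coeff E k))"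
  proof (intro sum.cong refl)
    fix k
    have "coeff (monom c 1 * E) (Suc k) = c * coeff E k" by (simp only: coeff_monom_mult) simp
    moreover have "int (Suc k) - n - 1 - d = int k - (n - 1) - 1 - d" by simp
    ultimately show "M (int (Suc k) - n - 1 - d) * coeff (monom c 1 * E) (Suc k) = c * (M (int k - (n - 1) - 1 - d) * coeff E k)"
      by (simp only: mult.left_commute)
  qed
  also have "\<dots> = c * GG M (n - 1) d E" by (simp add: GG_def sum_distrib_left)
  finally show ?thesis .
qed

lemma GG_0: "GG M n d 0 = 0" by (simp add: GG_def)

definition FL :: "nat \<Rightarrow> F \<Rightarrow> F" where "FL k v = Poly_Mapping.map (\<lambda>u. V k * u) v"

lemma lk_FL: "lk (FL k v) \<beta> = V k * lk v \<beta>"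
  unfolding FL_def by (simp add: lookup_map0)

lemma lk_fscale: "lk (fscale c v) \<beta> = C c * lk v \<beta>"
  unfolding fscale_def by (simp add: lookup_map0 smul_conv)

lemma FL_add: "FL k (v + w) = FL k v + FL k w"
  by (rule poly_mapping_eqI) (simp add: lk_FL lookup_add distrib_left)
lemma FL_0: "FL k 0 = 0"
  by (rule poly_mapping_eqI) (simp add: lk_FL)
lemma FL_sum: "FL k (\<Sum>x\<in>X. f x) = (\<Sum>x\<in>X. FL k (f x))"
  by (rule poly_mapping_eqI) (simp add: lk_FL lookup_sum sum_distrib_left)
lemma FL_single: "FL k (Poly_Mapping.single \<beta> u) = Poly_Mapping.single \<beta> (V k * u)"
  by (rule poly_mapping_eqI) (simp add: lk_FL lookup_single when_def)
lemma fscale_add: "fscale c (v + w) = fscale c v + fscale c w"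
  by (rule poly_mapping_eqI) (simp add: lk_fscale lookup_add distrib_left)
lemma fscale_0: "fscale c 0 = 0"
  by (rule poly_mapping_eqI) (simp add: lk_fscale)
lemma fscale_zero: "fscale 0 v = 0"
  by (rule poly_mapping_eqI) (simp add: lk_fscale)
lemma fscale_sum: "fscale c (\<Sum>x\<in>X. f x) = (\<Sum>x\<in>X. fscale c (f x))"
  by (rule poly_mapping_eqI) (simp add: lk_fscale lookup_sum sum_distrib_left)
lemma fscale_single: "fscale c (Poly_Mapping.single \<beta> u) = Poly_Mapping.single \<beta> (C c * u)"
  by (rule poly_mapping_eqI) (simp add: lk_fscale lookup_single when_def)
lemma fscale_fscale: "fscale c (fscale d v) = fscale (c * d) v"
  by (rule poly_mapping_eqI) (simp only: lk_fscale mult.assoc[symmetric] C_mult_C)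
lemma fscale_FL: "fscale c (FL k v) = FL k (fscale c v)"
  by (rule poly_mapping_eqI) (simp add: lk_fscale lk_FL mult.left_commute)
lemma fscale_eq0: "c \<noteq> 0 \<Longrightarrow> fscale c v = 0 \<Longrightarrow> v = 0"
proof (rule poly_mapping_eqI)
  fix \<beta> assume c: "c \<noteq> 0" and h: "fscale c v = 0"
  have "fscale (1 / c) (fscale c v) = v" using c by (simp add: fscale_fscale poly_mapping_eq_iff fun_eq_iff lk_fscale)
  then show "lk v \<beta> = lk 0 \<beta>" using h fscale_0 by metis
qed
lemma ks_FL: "ks (FL k v) \<subseteq> ks v"
  by (auto simp: in_keys_iff lk_FL)
lemma ks_fscale: "ks (fscale c v) \<subseteq> ks v"
  by (auto simp: in_keys_iff lk_fscale)

locale fx = fk +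
  fixes eps :: "lat \<Rightarrow> lat \<Rightarrow> int"
begin

abbreviation "Mc \<equiv> Mcoef q qh s a"
abbreviation "E \<equiv> Eplus q qh l A s a"
abbreviation "sa \<equiv> sscale s (sroot a)"

definition XU :: "int \<Rightarrow> lat \<Rightarrow> S \<Rightarrow> S" where
  "XU n \<beta> u = C (of_int (eps sa \<beta>)) * GG Mc n (s * form l A (sroot a) \<beta>) (E u)"

lemma Xm_XU: "Xmode q qh l A eps s a n v = (\<Sum>\<beta>\<in>ks v. Poly_Mapping.single (ladd \<beta> sa) (XU n \<beta> (lk v \<beta>)))"
  unfolding Xmode_def Let_def XU_def GG_def smul_conv ..

lemma XU_add: "XU n \<beta> (u + w) = XU n \<beta> u + XU n \<beta> w"
  unfolding XU_def Eplus_add GG_add by (simp add: distrib_left)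
lemma XU_0: "XU n \<beta> 0 = 0"
  unfolding XU_def Eplus_0 GG_0 by simp
lemma XU_C: "XU n \<beta> (C c * u) = C c * XU n \<beta> u"
  unfolding XU_def Eplus_C GG_smult by (simp add: mult.left_commute)
lemma XU_V: "k \<in> {1..l} \<Longrightarrow> XU n \<beta> (V k * u) = V k * XU n \<beta> u + C (dcoef q qh A s a k) * XU (n - 1) \<beta> u"
  unfolding XU_def Eplus_V GG_add GG_smult GG_monom1 by (simp add: distrib_left mult.left_commute)

lemma Xm_sup: "finite K \<Longrightarrow> ks v \<subseteq> K \<Longrightarrow>
   Xmode q qh l A eps s a n v = (\<Sum>\<beta>\<in>K. Poly_Mapping.single (ladd \<beta> sa) (XU n \<beta> (lk v \<beta>)))"
  unfolding Xm_XU by (rule sum.mono_neutral_left) (auto simp: in_keys_iff XU_0)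

lemma Xm_add: "Xmode q qh l A eps s a n (v + w) = Xmode q qh l A eps s a n v + Xmode q qh l A eps s a n w"
proof -
  let ?K = "ks v \<union> ks w"
  have "ks (v + w) \<subseteq> ?K" by (rule keys_add)
  then show ?thesis
    using Xm_sup[of ?K "v + w" n] Xm_sup[of ?K v n] Xm_sup[of ?K w n]
    by (simp add: lookup_add XU_add single_add sum.distrib)
qed

lemma Xm_0: "Xmode q qh l A eps s a n 0 = 0"
  unfolding Xm_XU by simp

lemma Xm_fscale: "Xmode q qh l A eps s a n (fscale c v) = fscale c (Xmode q qh l A eps s a n v)"
proof -
  have "Xmode q qh l A eps s a n (fscale c v) = (\<Sum>\<beta>\<in>ks v. Poly_Mapping.single (ladd \<beta> sa) (XU n \<beta> (lk (fscale c v) \<beta>)))"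
    using ks_fscale by (intro Xm_sup) auto
  then show ?thesis unfolding Xm_XU fscale_sum fscale_single lk_fscale XU_C .
qed

lemma Xm_FL:
  assumes "k \<in> {1..l}"
  shows "Xmode q qh l A eps s a n (FL k v) = FL k (Xmode q qh l A eps s a n v) +
     fscale (dcoef q qh A s a k) (Xmode q qh l A eps s a (n - 1) v)"
proof -
  have "Xmode q qh l A eps s a n (FL k v) = (\<Sum>\<beta>\<in>ks v. Poly_Mapping.single (ladd \<beta> sa) (XU n \<beta> (lk (FL k v) \<beta>)))"
    using ks_FL by (intro Xm_sup) auto
  then show ?thesis unfolding Xm_XU FL_sum fscale_sum FL_single fscale_single lk_FL XU_V[OF assms]
    by (simp add: single_add sum.distrib)
qed

end



lemma opprod_Cons: "opprod (f # fs) = f \<circ> opprod fs" by (simp add: opprod_def)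
lemma opprod_Nil: "opprod [] = id" by (simp add: opprod_def)
lemma opprod_append: "opprod (xs @ ys) = opprod xs \<circ> opprod ys"
  by (induction xs) (simp_all add: opprod_def)

definition goodop :: "nat \<Rightarrow> (F \<Rightarrow> F) \<Rightarrow> bool" where
  "goodop k f \<longleftrightarrow> (\<forall>v w. f (v + w) = f v + f w) \<and> (\<forall>c v. f (fscale c v) = fscale c (f v)) \<and>
      (\<forall>v. f (FL k v) = FL k (f v))"

lemma goodop_opprod: "(\<forall>f\<in>set fs. goodop k f) \<Longrightarrow> goodop k (opprod fs)"
proof (induction fs)
  case Nil then show ?case by (simp add: goodop_def opprod_Nil)
next
  case (Cons f fs)
  then show ?case by (simp add: goodop_def opprod_Cons)
qed

lemma goodop_sum: "goodop k f \<Longrightarrow> f (\<Sum>x\<in>X. g x) = (\<Sum>x\<in>X. f (g x))"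
proof (induction X rule: infinite_finite_induct)
  case (infinite A)
  then show ?case
    using goodop_def[of k f] fscale_zero by (metis sum.infinite)
next
  case empty
  then show ?case using goodop_def[of k f] fscale_zero by (metis sum.empty)
next
  case (insert x F)
  then show ?case by (simp add: goodop_def)
qed

lemma dcoef_zero: "A a k = 0 \<Longrightarrow> dcoef q qh A s a k = 0"
  by (simp add: dcoef_def qint_def)

lemma Xm_good:
  assumes "k \<in> {1..l}" "A a k = 0"
  shows "goodop k (Xmode q qh l A eps s a n)"
proof -
  interpret fx q qh l A s a eps .
  show ?thesis unfolding goodop_def
    using Xm_add Xm_fscale Xm_FL[OF assms(1)] dcoef_zero[where A=A and a=a and k=k and q=q and qh=qh and s=s, OF assms(2)] by (simp add: fscale_zero)
qed

lemma FL_fscale_sum: "fscale c (FL k x + fscale d y) = FL k (fscale c x) + fscale d (fscale c y)"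
  by (simp add: fscale_add fscale_FL fscale_fscale mult.commute)

lemma Scoef_FL:
  assumes "k \<in> {1..l}" "A i k = 0"
  shows "Scoef q qh l A eps s i j n ns (FL k v) = FL k (Scoef q qh l A eps s i j n ns v) +
     fscale (dcoef q qh A s j k) (Scoef q qh l A eps s i j (n - 1) ns v)"
proof -
  let ?X = "Xmode q qh l A eps s"
  let ?m = "nat (1 - A i j)"
  let ?d = "dcoef q qh A s j k"
  interpret J: fx q qh l A s j eps .
  have gi: "goodop k (?X i t)" for t using Xm_good[where A=A and a=i and k=k and l=l, OF assms] .
  have key: "opprod (As @ [?X j n] @ Bs) (FL k v) = FL k (opprod (As @ [?X j n] @ Bs) v) + fscale ?d (opprod (As @ [?X j (n - 1)] @ Bs) v)"
    if "\<forall>f\<in>set As. goodop k f" "\<forall>f\<in>set Bs. goodop k f" for As Bs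
  proof -
    have gA: "goodop k (opprod As)" and gB: "goodop k (opprod Bs)" using that by (auto intro: goodop_opprod)
    have "opprod (As @ [?X j n] @ Bs) (FL k v) = opprod As (?X j n (FL k (opprod Bs v)))"
      using gB by (simp add: opprod_append opprod_Cons opprod_Nil goodop_def)
    also have "\<dots> = opprod As (FL k (?X j n (opprod Bs v)) + fscale ?d (?X j (n - 1) (opprod Bs v)))"
      using J.Xm_FL[OF assms(1)] by simp
    also have "\<dots> = FL k (opprod As (?X j n (opprod Bs v))) + fscale ?d (opprod As (?X j (n - 1) (opprod Bs v)))"
      using gA by (simp add: goodop_def)
    finally show ?thesis by (simp add: opprod_append opprod_Cons opprod_Nil)
  qed
  have gm: "\<forall>f\<in>set (map (\<lambda>t. ?X i (ns (\<sigma> t))) xs). goodop k f" for xs \<sigma> using gi by auto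
  have trm: "fscale c (opprod (map (\<lambda>t. ?X i (ns (\<sigma> t))) xs @ [?X j n] @ map (\<lambda>t. ?X i (ns (\<sigma> t))) ys) (FL k v))
     = FL k (fscale c (opprod (map (\<lambda>t. ?X i (ns (\<sigma> t))) xs @ [?X j n] @ map (\<lambda>t. ?X i (ns (\<sigma> t))) ys) v))
       + fscale ?d (fscale c (opprod (map (\<lambda>t. ?X i (ns (\<sigma> t))) xs @ [?X j (n - 1)] @ map (\<lambda>t. ?X i (ns (\<sigma> t))) ys) v))"
    for c xs ys \<sigma>
    unfolding key[OF gm gm] FL_fscale_sum ..
  show ?thesis
    unfolding Scoef_def Let_def
    by (simp only: trm FL_sum fscale_sum sum.distrib)
qed



lemma inQ_ladd: "inQ l x \<Longrightarrow> inQ l y \<Longrightarrow> inQ l (ladd x y)"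
  by (simp add: inQ_def ladd_def)
lemma inQ_sroot: "i \<in> {1..l} \<Longrightarrow> inQ l (sroot i)"
  by (auto simp: inQ_def sroot_def)
lemma inQ_sscale: "inQ l x \<Longrightarrow> inQ l (sscale c x)"
  by (simp add: inQ_def sscale_def)
lemma ladd_comm_assoc: "ladd (ladd b g) a = ladd (ladd b a) g"
  by (simp add: ladd_def fun_eq_iff algebra_simps)
lemma ladd_inj: "ladd x g = ladd y g \<Longrightarrow> x = y"
  by (simp add: ladd_def fun_eq_iff)
lemma form_ladd: "form l A x (ladd y z) = form l A x y + form l A x z"
  by (simp add: form_def ladd_def distrib_left sum.distrib)

lemma C_mult_eq0: "c \<noteq> 0 \<Longrightarrow> C c * u = 0 \<Longrightarrow> u = 0"
  by (metis lookup_C_mult mult_eq_0_iff poly_mapping_eqI lookup_zero)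

definition QS :: "nat \<Rightarrow> F \<Rightarrow> bool" where "QS l v \<longleftrightarrow> (\<forall>\<beta>\<in>ks v. inQ l \<beta>)"

lemma QS_add: "QS l v \<Longrightarrow> QS l w \<Longrightarrow> QS l (v + w)"
  unfolding QS_def using keys_add[of v w] by blast
lemma QS_0: "QS l 0" by (simp add: QS_def)
lemma QS_sum: "(\<And>x. x \<in> X \<Longrightarrow> QS l (g x)) \<Longrightarrow> QS l (sum g X)"
  by (induction X rule: infinite_finite_induct) (auto intro: QS_add QS_0)
lemma QS_fscale: "QS l v \<Longrightarrow> QS l (fscale c v)"
  unfolding QS_def using ks_fscale[of c v] by blast
lemma QS_single: "inQ l \<beta> \<Longrightarrow> QS l (Poly_Mapping.single \<beta> u)"
  by (simp add: QS_def)

lemma QS_Xm: "a \<in> {1..l} \<Longrightarrow> QS l v \<Longrightarrow> QS l (Xmode q qh l A eps s a n v)"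
  unfolding Xmode_def Let_def
  by (intro QS_sum QS_single inQ_ladd inQ_sscale inQ_sroot) (auto simp: QS_def)

definition TT :: "(lat \<Rightarrow> lat \<Rightarrow> int) \<Rightarrow> lat \<Rightarrow> F \<Rightarrow> F" where
  "TT eps g v = (\<Sum>\<beta>\<in>ks v. Poly_Mapping.single (ladd \<beta> g) (C (of_int (eps g \<beta>)) * lk v \<beta>))"

lemma TT_sup: "finite K \<Longrightarrow> ks v \<subseteq> K \<Longrightarrow>
    TT eps g v = (\<Sum>\<beta>\<in>K. Poly_Mapping.single (ladd \<beta> g) (C (of_int (eps g \<beta>)) * lk v \<beta>))"
  unfolding TT_def by (rule sum.mono_neutral_left) (auto simp: in_keys_iff)

lemma TT_add: "TT eps g (v + w) = TT eps g v + TT eps g w"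
proof -
  let ?K = "ks v \<union> ks w"
  have "ks (v + w) \<subseteq> ?K" by (rule keys_add)
  then show ?thesis
    using TT_sup[of ?K "v + w"] TT_sup[of ?K v] TT_sup[of ?K w]
    by (simp add: lookup_add distrib_left single_add sum.distrib)
qed

lemma TT_0: "TT eps g 0 = 0" by (simp add: TT_def)

lemma TT_sum: "TT eps g (\<Sum>x\<in>X. f x) = (\<Sum>x\<in>X. TT eps g (f x))"
  by (induction X rule: infinite_finite_induct) (simp_all add: TT_0 TT_add)

lemma TT_single: "TT eps g (Poly_Mapping.single \<beta> u) = Poly_Mapping.single (ladd \<beta> g) (C (of_int (eps g \<beta>)) * u)"
  by (subst TT_sup[of "{\<beta>}"]) auto

lemma TT_fscale: "TT eps g (fscale c v) = fscale c (TT eps g v)"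
proof -
  have "TT eps g (fscale c v) = (\<Sum>\<beta>\<in>ks v. Poly_Mapping.single (ladd \<beta> g) (C (of_int (eps g \<beta>)) * lk (fscale c v) \<beta>))"
    using ks_fscale by (intro TT_sup) auto
  then show ?thesis unfolding TT_def fscale_sum fscale_single lk_fscale by (simp add: mult.left_commute)
qed

lemma lk_TT: "lk (TT eps g v) (ladd \<beta> g) = C (of_int (eps g \<beta>)) * lk v \<beta>"
proof -
  have "lk (TT eps g v) (ladd \<beta> g) = (\<Sum>b\<in>ks v. if b = \<beta> then C (of_int (eps g b)) * lk v b else 0)"
    unfolding TT_def lookup_sum
    by (intro sum.cong refl) (auto simp: lookup_single when_def dest: ladd_inj)
  also have "\<dots> = C (of_int (eps g \<beta>)) * lk v \<beta>" by (auto simp: sum.delta in_keys_iff)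
  finally show ?thesis .
qed

lemma TT_eq0:
  assumes "cocycle l A eps" "inQ l g" "QS l w" "TT eps g w = 0"
  shows "w = 0"
proof (rule poly_mapping_eqI)
  fix \<beta>
  show "lk w \<beta> = lk 0 \<beta>"
  proof (cases "\<beta> \<in> ks w")
    case True
    then have "inQ l \<beta>" using assms(3) by (simp add: QS_def)
    then have "eps g \<beta> \<in> {1, -1}" using assms(1,2) by (simp add: cocycle_def)
    then have "complex_of_int (eps g \<beta>) \<noteq> 0" by auto
    moreover have "C (of_int (eps g \<beta>)) * lk w \<beta> = 0" using lk_TT[of eps g w \<beta>] assms(4) by simp
    ultimately have "lk w \<beta> = 0" by (rule C_mult_eq0)
    then show ?thesis by simp
  qed (simp add: in_keys_iff)
qed



lemma GG_shift: "GG M n (d + e) E = GG M (n + e) d E"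
  unfolding GG_def by (intro sum.cong refl) (simp add: algebra_simps)

lemma ks_TT: "ks (TT eps g v) \<subseteq> (\<lambda>\<beta>. ladd \<beta> g) ` ks v"
proof -
  have "ks (TT eps g v) \<subseteq> (\<Union>\<beta>\<in>ks v. ks (Poly_Mapping.single (ladd \<beta> g) (C (of_int (eps g \<beta>)) * lk v \<beta>)))"
    unfolding TT_def by (rule keys_sum)
  also have "\<dots> \<subseteq> (\<lambda>\<beta>. ladd \<beta> g) ` ks v" by auto
  finally show ?thesis .
qed

context fx begin

lemma Xm_TT:
  assumes coc: "cocycle l A eps" and g: "inQ l g" and a: "a \<in> {1..l}" and v: "QS l v"
  shows "Xmode q qh l A eps s a n (TT eps g v) =
     fscale (of_int (eps sa g) / of_int (eps g sa)) (TT eps g (Xmode q qh l A eps s a (n + s * form l A (sroot a) g) v))"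
proof -
  let ?\<delta> = "s * form l A (sroot a) g"
  let ?z = "complex_of_int (eps sa g) / of_int (eps g sa)"
  let ?d = "\<lambda>\<beta>. s * form l A (sroot a) \<beta>"
  have saQ: "inQ l sa" using a by (intro inQ_sscale inQ_sroot)
  have bQ: "inQ l \<beta>" if "\<beta> \<in> ks v" for \<beta> using v that by (simp add: QS_def)
  have epm: "eps x y \<in> {1, -1}" if "inQ l x" "inQ l y" for x y using coc that by (simp add: cocycle_def)
  have e1: "eps sa (ladd \<beta> g) = eps sa \<beta> * eps sa g" if "inQ l \<beta>" for \<beta>
    using coc saQ g that by (simp add: cocycle_def)
  have e2: "eps g (ladd \<beta> sa) = eps g \<beta> * eps g sa" if "inQ l \<beta>" for \<beta>
    using coc saQ g that by (simp add: cocycle_def)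
  have nz: "complex_of_int (eps g sa) \<noteq> 0" using epm[OF g saQ] by auto
  have inj: "inj_on (\<lambda>\<beta>. ladd \<beta> g) (ks v)" by (auto intro: inj_onI dest: ladd_inj)
  have "Xmode q qh l A eps s a n (TT eps g v) =
      (\<Sum>\<beta>'\<in>(\<lambda>\<beta>. ladd \<beta> g) ` ks v. Poly_Mapping.single (ladd \<beta>' sa) (XU n \<beta>' (lk (TT eps g v) \<beta>')))"
    using ks_TT by (intro Xm_sup) auto
  also have "\<dots> = (\<Sum>\<beta>\<in>ks v. Poly_Mapping.single (ladd (ladd \<beta> g) sa) (XU n (ladd \<beta> g) (lk (TT eps g v) (ladd \<beta> g))))"
    using inj by (simp add: sum.reindex)
  also have "\<dots> = (\<Sum>\<beta>\<in>ks v. Poly_Mapping.single (ladd (ladd \<beta> sa) g)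
        (C (?z * of_int (eps g (ladd \<beta> sa))) * XU (n + ?\<delta>) \<beta> (lk v \<beta>)))"
  proof (intro sum.cong refl)
    fix \<beta> assume b: "\<beta> \<in> ks v"
    have "XU n (ladd \<beta> g) (lk (TT eps g v) (ladd \<beta> g)) =
       C (of_int (eps g \<beta>)) * (C (of_int (eps sa \<beta> * eps sa g)) * GG Mc (n + ?\<delta>) (?d \<beta>) (E (lk v \<beta>)))"
      unfolding lk_TT XU_C unfolding XU_def e1[OF bQ[OF b]] form_ladd distrib_left GG_shift ..
    also have "\<dots> = C (?z * of_int (eps g (ladd \<beta> sa))) * XU (n + ?\<delta>) \<beta> (lk v \<beta>)"
    proof -
      have "complex_of_int (eps g \<beta>) * of_int (eps sa \<beta> * eps sa g) = (?z * of_int (eps g (ladd \<beta> sa))) * of_int (eps sa \<beta>)"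
        unfolding e2[OF bQ[OF b]] using nz by (simp add: field_simps)
      then show ?thesis unfolding XU_def by (simp only: mult.assoc[symmetric] C_mult_C)
    qed
    finally show "Poly_Mapping.single (ladd (ladd \<beta> g) sa) (XU n (ladd \<beta> g) (lk (TT eps g v) (ladd \<beta> g))) =
        Poly_Mapping.single (ladd (ladd \<beta> sa) g) (C (?z * of_int (eps g (ladd \<beta> sa))) * XU (n + ?\<delta>) \<beta> (lk v \<beta>))"
      by (simp add: ladd_comm_assoc)
  qed
  also have "\<dots> = fscale ?z (TT eps g (Xmode q qh l A eps s a (n + ?\<delta>) v))"
    unfolding Xm_XU TT_sum TT_single fscale_sum fscale_single
    by (simp only: mult.assoc[symmetric] C_mult_C)
  finally show ?thesis .
qed

end



definition relT :: "nat \<Rightarrow> (lat \<Rightarrow> lat \<Rightarrow> int) \<Rightarrow> lat \<Rightarrow> complex \<times> (F \<Rightarrow> F) \<times> (F \<Rightarrow> F) \<Rightarrow> bool" where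
  "relT l eps g z \<longleftrightarrow> (\<forall>v. QS l v \<longrightarrow> fst (snd z) (TT eps g v) = fscale (fst z) (TT eps g (snd (snd z) v))) \<and>
     (\<forall>v. QS l v \<longrightarrow> QS l (snd (snd z) v)) \<and> (\<forall>c v. fst (snd z) (fscale c v) = fscale c (fst (snd z) v))"

lemma opT:
  assumes "\<forall>z\<in>set zs. relT l eps g z" "QS l v"
  shows "opprod (map (\<lambda>z. fst (snd z)) zs) (TT eps g v) =
      fscale (prod_list (map fst zs)) (TT eps g (opprod (map (\<lambda>z. snd (snd z)) zs) v)) \<and>
    QS l (opprod (map (\<lambda>z. snd (snd z)) zs) v)"
  using assms(1)
proof (induction zs)
  case Nil
  then show ?case using assms(2) by (simp add: opprod_Nil lk_fscale poly_mapping_eq_iff fun_eq_iff)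
next
  case (Cons z zs)
  obtain c f h where z: "z = (c, f, h)" by (cases z) auto
  have r: "relT l eps g z" and IH: "opprod (map (\<lambda>z. fst (snd z)) zs) (TT eps g v) =
      fscale (prod_list (map fst zs)) (TT eps g (opprod (map (\<lambda>z. snd (snd z)) zs) v)) \<and>
    QS l (opprod (map (\<lambda>z. snd (snd z)) zs) v)" using Cons by auto
  let ?G = "opprod (map (\<lambda>z. snd (snd z)) zs) v"
  have "opprod (map (\<lambda>z. fst (snd z)) (z # zs)) (TT eps g v) = f (fscale (prod_list (map fst zs)) (TT eps g ?G))"
    using IH z by (simp add: opprod_Cons)
  also have "\<dots> = fscale (prod_list (map fst zs)) (fscale c (TT eps g (h ?G)))"
    using r IH z by (simp add: relT_def)
  also have "\<dots> = fscale (prod_list (map fst (z # zs))) (TT eps g (opprod (map (\<lambda>z. snd (snd z)) (z # zs)) v))"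
    using z by (simp add: fscale_fscale opprod_Cons mult.commute)
  finally show ?case using r IH z by (simp add: relT_def opprod_Cons)
qed

lemma relT_X:
  assumes "cocycle l A eps" "inQ l g" "a \<in> {1..l}"
  shows "relT l eps g (of_int (eps (sscale s (sroot a)) g) / of_int (eps g (sscale s (sroot a))),
     Xmode q qh l A eps s a t, Xmode q qh l A eps s a (t + s * form l A (sroot a) g))"
proof -
  interpret fx q qh l A s a eps .
  show ?thesis unfolding relT_def using Xm_TT[OF assms] QS_Xm[OF assms(3)] Xm_fscale by simp
qed

lemma prod_list_const: "prod_list (map (\<lambda>_. c) xs) = c ^ length xs"
  by (induction xs) auto

lemma pl3: "prod_list (map fst (map (\<lambda>t. (c, f t, h t)) xs @ [(d, F, H)] @ map (\<lambda>t. (c, f' t, h' t)) ys))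
   = c ^ (length xs + length ys) * d" for c :: complex
  by (simp add: prod_list_const o_def power_add mult_ac)

lemma Scoef_TT:
  assumes coc: "cocycle l A eps" and g: "inQ l g" and i: "i \<in> {1..l}" and j: "j \<in> {1..l}" and v: "QS l v"
  shows "Scoef q qh l A eps s i j n ns (TT eps g v) =
     fscale ((of_int (eps (sscale s (sroot i)) g) / of_int (eps g (sscale s (sroot i)))) ^ nat (1 - A i j) *
             (of_int (eps (sscale s (sroot j)) g) / of_int (eps g (sscale s (sroot j)))))
       (TT eps g (Scoef q qh l A eps s i j (n + s * form l A (sroot j) g) (\<lambda>x. ns x + s * form l A (sroot i) g) v))"
proof -
  let ?X = "Xmode q qh l A eps s"
  let ?m = "nat (1 - A i j)"
  let ?zi = "complex_of_int (eps (sscale s (sroot i)) g) / of_int (eps g (sscale s (sroot i)))"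
  let ?zj = "complex_of_int (eps (sscale s (sroot j)) g) / of_int (eps g (sscale s (sroot j)))"
  let ?di = "s * form l A (sroot i) g"
  let ?dj = "s * form l A (sroot j) g"
  let ?ns = "\<lambda>x. ns x + ?di"
  define zs where "zs \<sigma> r = map (\<lambda>t. (?zi, ?X i (ns (\<sigma> t)), ?X i (ns (\<sigma> t) + ?di))) [1..<r+1] @
       [(?zj, ?X j n, ?X j (n + ?dj))] @ map (\<lambda>t. (?zi, ?X i (ns (\<sigma> t)), ?X i (ns (\<sigma> t) + ?di))) [r+1..<?m+1]"
    for \<sigma> r
  have rel: "\<forall>z\<in>set (zs \<sigma> r). relT l eps g z" for \<sigma> r
    unfolding zs_def using relT_X[OF coc g i] relT_X[OF coc g j] by auto
  have m1: "map (\<lambda>z. fst (snd z)) (zs \<sigma> r) = map (\<lambda>t. ?X i (ns (\<sigma> t))) [1..<r+1] @ [?X j n] @ map (\<lambda>t. ?X i (ns (\<sigma> t))) [r+1..<?m+1]" for \<sigma> r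
    unfolding zs_def by simp
  have m2: "map (\<lambda>z. snd (snd z)) (zs \<sigma> r) = map (\<lambda>t. ?X i (?ns (\<sigma> t))) [1..<r+1] @ [?X j (n + ?dj)] @ map (\<lambda>t. ?X i (?ns (\<sigma> t))) [r+1..<?m+1]" for \<sigma> r
    unfolding zs_def by simp
  have m3: "prod_list (map fst (zs \<sigma> r)) = ?zi ^ ?m * ?zj" if "r \<le> ?m" for \<sigma> r
  proof -
    have "prod_list (map fst (zs \<sigma> r)) = ?zi ^ (length [1..<r+1] + length [r+1..<?m+1]) * ?zj"
      unfolding zs_def by (rule pl3)
    also have "length [1..<r+1] + length [r+1..<?m+1] = ?m" by (simp only: length_upt) (use that in arith)
    finally show ?thesis .
  qed
  have trm: "fscale c (opprod (map (\<lambda>t. ?X i (ns (\<sigma> t))) [1..<r+1] @ [?X j n] @ map (\<lambda>t. ?X i (ns (\<sigma> t))) [r+1..<?m+1]) (TT eps g v))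
     = fscale (?zi ^ ?m * ?zj) (TT eps g (fscale c (opprod (map (\<lambda>t. ?X i (?ns (\<sigma> t))) [1..<r+1] @ [?X j (n + ?dj)] @ map (\<lambda>t. ?X i (?ns (\<sigma> t))) [r+1..<?m+1]) v)))"
    if "r \<in> {0..?m}" for c \<sigma> r
    using conjunct1[OF opT[OF rel v, of \<sigma> r]] m1 m2 m3[of r \<sigma>] that
    by (simp add: TT_fscale fscale_fscale mult.commute)
  show ?thesis
    unfolding Scoef_def Let_def
    by (simp only: trm TT_sum fscale_sum cong: sum.cong)
qed



lemma QS_opprod: "(\<forall>f\<in>set fs. \<forall>v. QS l v \<longrightarrow> QS l (f v)) \<Longrightarrow> QS l v \<Longrightarrow> QS l (opprod fs v)"
  by (induction fs) (simp_all add: opprod_Nil opprod_Cons)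

lemma QS_Scoef:
  assumes "i \<in> {1..l}" "j \<in> {1..l}" "QS l v"
  shows "QS l (Scoef q qh l A eps s i j n ns v)"
proof -
  have H: "QS l (opprod (map (\<lambda>t. Xmode q qh l A eps s i (ns (\<sigma> t))) xs @ [Xmode q qh l A eps s j n] @
        map (\<lambda>t. Xmode q qh l A eps s i (ns (\<sigma> t))) ys) v)" for xs ys \<sigma>
  proof (rule QS_opprod[OF _ assms(3)])
    show "\<forall>f\<in>set (map (\<lambda>t. Xmode q qh l A eps s i (ns (\<sigma> t))) xs @ [Xmode q qh l A eps s j n] @
        map (\<lambda>t. Xmode q qh l A eps s i (ns (\<sigma> t))) ys). \<forall>v. QS l v \<longrightarrow> QS l (f v)"
      using QS_Xm[OF assms(1)] QS_Xm[OF assms(2)] by auto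
  qed
  show ?thesis unfolding Scoef_def Let_def
    by (intro QS_sum QS_fscale H)
qed

lemma validF_QS: "validF l v \<Longrightarrow> QS l v"
  by (simp add: validF_def QS_def)

lemma validF_FL:
  assumes "validF l v" "k \<in> {1..l}"
  shows "validF l (FL k v)"
proof -
  have A: "inQ l \<beta>" if b: "\<beta> \<in> ks (FL k v)" for \<beta>
  proof -
    have "\<beta> \<in> ks v" using b ks_FL by blast
    then show ?thesis using assms(1) by (simp add: validF_def)
  qed
  have B: "fst x \<in> {1..l} \<and> 1 \<le> snd x" if b: "\<beta> \<in> ks (FL k v)" and m: "\<mu> \<in> ks (lk (FL k v) \<beta>)"
     and x: "x \<in> ks \<mu>" for \<beta> \<mu> x
  proof -
    have b': "\<beta> \<in> ks v" using b ks_FL by blast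
    have "ks (V k * lk v \<beta>) \<subseteq> {a + b |a b. a \<in> ks (V k) \<and> b \<in> ks (lk v \<beta>)}" by (rule keys_mult)
    then obtain c where c: "c \<in> ks (lk v \<beta>)" and mu: "\<mu> = ev (k,1) + c" using m by (auto simp: lk_FL)
    have "ks \<mu> \<subseteq> ks (ev (k,1)) \<union> ks c" unfolding mu by (rule keys_add)
    then have "x = (k,1) \<or> x \<in> ks c" using x by (auto simp: ev_def)
    then show ?thesis using assms c b' by (auto simp: validF_def)
  qed
  show ?thesis unfolding validF_def using A B by blast
qed

lemma validF_TT:
  assumes "validF l v" "inQ l g"
  shows "validF l (TT eps g v)"
proof -
  have A: "inQ l \<beta>" if b: "\<beta> \<in> ks (TT eps g v)" for \<beta>
  proof -
    obtain b0 where b0: "b0 \<in> ks v" and be: "\<beta> = ladd b0 g" using b ks_TT by blast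
    then show ?thesis using assms by (auto simp: validF_def intro: inQ_ladd)
  qed
  have B: "fst x \<in> {1..l} \<and> 1 \<le> snd x" if b: "\<beta> \<in> ks (TT eps g v)" and m: "\<mu> \<in> ks (lk (TT eps g v) \<beta>)"
     and x: "x \<in> ks \<mu>" for \<beta> \<mu> x
  proof -
    obtain b0 where b0: "b0 \<in> ks v" and be: "\<beta> = ladd b0 g" using b ks_TT by blast
    have "\<mu> \<in> ks (lk v b0)" using m keys_C_mult unfolding be lk_TT by blast
    then show ?thesis using assms(1) b0 x by (auto simp: validF_def)
  qed
  show ?thesis unfolding validF_def using A B by blast
qed

lemma qint_nz:
  assumes q0: "q \<noteq> 0" and nr: "\<forall>d::nat. d > 0 \<longrightarrow> q ^ d \<noteq> 1" and n: "n \<noteq> 0"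
  shows "qint q n \<noteq> 0"
proof -
  have den: "q - inverse q \<noteq> 0"
  proof
    assume "q - inverse q = 0"
    then have "q * q = 1" using q0 by (simp add: field_simps)
    then show False using nr[rule_format, of 2] by (simp add: power2_eq_square)
  qed
  have num: "q powi n - q powi (- n) \<noteq> 0"
  proof
    assume "q powi n - q powi (- n) = 0"
    then have "q powi n * q powi n = q powi (- n) * q powi n" by simp
    moreover have "q powi (- n) * q powi n = 1" using q0 by (simp add: power_int_minus)
    moreover have "q powi (n + n) = q powi n * q powi n" by (rule power_int_add) (simp add: q0)
    ultimately have e: "q powi (n + n) = 1" by simp
    show False
    proof (cases "n > 0")
      case True
      then have "q ^ nat (n + n) = 1" using e by (simp add: power_int_def)
      then show False using nr True by (metis nat_0_less_mult_iff zero_less_nat_eq add_pos_pos)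
    next
      case False
      then have "n + n < 0" using n by simp
      then have "inverse q ^ nat (- (n + n)) = 1" using e by (simp add: power_int_def del: power_inverse)
      then have "q ^ nat (- (n + n)) = 1" by (metis power_inverse inverse_1 inverse_inverse_eq)
      then show False using nr \<open>n + n < 0\<close> by (metis neg_0_less_iff_less zero_less_nat_eq)
    qed
  qed
  show ?thesis unfolding qint_def using num den by simp
qed

lemma form_sroot_gen:
  assumes "a \<in> {1..l}" "b \<in> {1..l}"
  shows "form l A (sroot a) (sscale c (sroot b)) = c * A a b"
proof -
  have "form l A (sroot a) (sscale c (sroot b)) = (\<Sum>x\<in>{1..l}. \<Sum>y\<in>{1..l}. if x = a \<and> y = b then c * A a b else 0)"
    unfolding form_def sroot_def sscale_def by (intro sum.cong refl) auto
  also have "\<dots> = (\<Sum>x\<in>{1..l}. if x = a then c * A a b else 0)"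
  proof (intro sum.cong refl)
    fix x show "(\<Sum>y\<in>{1..l}. if x = a \<and> y = b then c * A a b else 0) = (if x = a then c * A a b else 0)"
      using assms(2) by (cases "x = a") (simp_all add: sum.delta)
  qed
  also have "\<dots> = c * A a b" using assms(1) by (simp add: sum.delta)
  finally show ?thesis .
qed

lemma sscale_1: "sscale 1 x = x" by (simp add: sscale_def)



lemma step_down:
  assumes k: "k \<in> {1..l}" and aik: "A i k = 0" and d: "dcoef q qh A s j k \<noteq> 0"
    and S: "S_zero q qh l A eps s i j n"
  shows "S_zero q qh l A eps s i j (n - 1)"
  unfolding S_zero_def
proof (intro allI impI)
  fix ns v assume v: "validF l v"
  have "Scoef q qh l A eps s i j n ns (FL k v) = 0" using S validF_FL[OF v k] by (simp add: S_zero_def)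
  moreover have "Scoef q qh l A eps s i j n ns v = 0" using S v by (simp add: S_zero_def)
  ultimately have "fscale (dcoef q qh A s j k) (Scoef q qh l A eps s i j (n - 1) ns v) = 0"
    using Scoef_FL[where k=k and A=A and i=i and l=l and q=q and qh=qh and eps=eps and s=s and j=j and n=n and ns=ns and v=v, OF k aik] by (simp add: FL_0)
  then show "Scoef q qh l A eps s i j (n - 1) ns v = 0" using fscale_eq0 d by blast
qed

lemma step_shift:
  assumes coc: "cocycle l A eps" and g: "inQ l g" and i: "i \<in> {1..l}" and j: "j \<in> {1..l}"
    and S: "S_zero q qh l A eps s i j n"
  shows "S_zero q qh l A eps s i j (n + s * form l A (sroot j) g)"
  unfolding S_zero_def
proof (intro allI impI)
  fix ns v assume v: "validF l v"
  let ?di = "s * form l A (sroot i) g"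
  let ?ns = "\<lambda>x::nat. ns x - ?di"
  let ?zi = "complex_of_int (eps (sscale s (sroot i)) g) / of_int (eps g (sscale s (sroot i)))"
  let ?zj = "complex_of_int (eps (sscale s (sroot j)) g) / of_int (eps g (sscale s (sroot j)))"
  have nzr: "complex_of_int (eps x g) / of_int (eps g x) \<noteq> 0" if "inQ l x" for x
  proof -
    have "eps x g \<in> {1, -1}" "eps g x \<in> {1, -1}" using coc that g by (auto simp: cocycle_def)
    then show ?thesis by auto
  qed
  have Z: "?zi ^ nat (1 - A i j) * ?zj \<noteq> 0"
    using nzr[OF inQ_sscale[OF inQ_sroot[OF i]]] nzr[OF inQ_sscale[OF inQ_sroot[OF j]]] by simp
  have "Scoef q qh l A eps s i j n ?ns (TT eps g v) = 0" using S validF_TT[OF v g] by (simp add: S_zero_def)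
  moreover have "(\<lambda>x. ?ns x + ?di) = ns" by simp
  ultimately have "fscale (?zi ^ nat (1 - A i j) * ?zj) (TT eps g (Scoef q qh l A eps s i j (n + s * form l A (sroot j) g) ns v)) = 0"
    using Scoef_TT[OF coc g i j validF_QS[OF v], where q=q and qh=qh and n=n and ns="?ns"] by simp
  then have "TT eps g (Scoef q qh l A eps s i j (n + s * form l A (sroot j) g) ns v) = 0"
    using fscale_eq0 Z by blast
  then show "Scoef q qh l A eps s i j (n + s * form l A (sroot j) g) ns v = 0"
    using TT_eq0[OF coc g QS_Scoef[OF i j validF_QS[OF v]]] by blast
qed

lemma iter_up:
  assumes "\<And>n. P n \<Longrightarrow> P (n + G)" "P n0"
  shows "P (n0 + int t * G)"
proof (induction t)
  case 0 then show ?case using assms(2) by simp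
next
  case (Suc t)
  have p: "P (n0 + int t * G + G)" using assms(1) Suc.IH .
  have eq: "n0 + int (Suc t) * G = n0 + int t * G + G" by (simp add: algebra_simps)
  show ?case using p by (subst eq)
qed

lemma iter_down:
  assumes "\<And>n. P n \<Longrightarrow> P (n - 1)" "P n0"
  shows "P (n0 - int d)"
proof (induction d)
  case 0 then show ?case using assms(2) by simp
next
  case (Suc d) then show ?case using assms(1)[of "n0 - int d"] by (simp add: algebra_simps)
qed

theorem mainTheorem6:
  fixes l :: nat and A :: "nat \<Rightarrow> nat \<Rightarrow> int" and q qh :: complex
    and eps :: "lat \<Rightarrow> lat \<Rightarrow> int" and s :: int and i j k :: nat
  assumes "sym_GCM l A"
    and "q \<noteq> 0" and "\<forall>d::nat. d > 0 \<longrightarrow> q ^ d \<noteq> 1" and "qh ^ 2 = q"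
    and "cocycle l A eps"
    and "s \<in> {1, -1}"
    and "i \<in> {1..l}" and "j \<in> {1..l}" and "i \<noteq> j"
    and "k \<in> {1..l}" and "A k i = 0" and "A k j \<noteq> 0"
    and "\<exists>n0. S_zero q qh l A eps s i j n0"
  shows "\<forall>n. S_zero q qh l A eps s i j n"
proof
  fix N
  note gcm = assms(1)[unfolded sym_GCM_def]
  have ki: "k \<noteq> i" using assms(7,11) gcm by auto
  have aik: "A i k = 0" using ki assms(7,10,11) gcm by metis
  have ajk: "A j k \<noteq> 0"
  proof (cases "k = j")
    case True then show ?thesis using gcm assms(8) by auto
  next
    case False then show ?thesis using gcm assms(8,10,12) by metis
  qed
  have qh0: "qh \<noteq> 0" using assms(2,4) by auto
  have s0: "s \<noteq> 0" using assms(6) by auto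
  have q1: "qint q (int 1) \<noteq> 0" by (rule qint_nz[OF assms(2,3)]) simp
  have qjk: "qint q (A j k * int 1) \<noteq> 0" by (rule qint_nz[OF assms(2,3)]) (simp add: ajk)
  have d: "dcoef q qh A s j k \<noteq> 0"
    unfolding dcoef_def using qh0 s0 q1 qjk by (simp add: power_int_eq_0_iff)
  let ?P = "S_zero q qh l A eps s i j"
  have down: "?P n \<Longrightarrow> ?P (n - 1)" for n by (rule step_down[OF assms(10) aik d])
  have gQ: "inQ l (sscale c (sroot k))" for c by (intro inQ_sscale inQ_sroot assms(10))
  have sh: "?P n \<Longrightarrow> ?P (n + s * (c * A j k))" for n c
    using step_shift[OF assms(5) gQ[of c] assms(7,8)] form_sroot_gen[OF assms(8,10), of A c] by simp
  let ?G = "\<bar>A j k\<bar>"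
  have up: "?P n \<Longrightarrow> ?P (n + ?G)" for n
  proof -
    assume "?P n"
    have "s * (1 * A j k) = ?G \<or> s * ((-1) * A j k) = ?G" using assms(6) by (auto simp: abs_if)
    then show "?P (n + ?G)" using sh[OF \<open>?P n\<close>, of 1] sh[OF \<open>?P n\<close>, of "-1"] by metis
  qed
  obtain n0 where n0: "?P n0" using assms(13) by blast
  define t where "t = nat (N - n0)"
  have G1: "?G \<ge> 1" using ajk by simp
  have ge: "n0 + int t * ?G \<ge> N"
  proof -
    have "int t * ?G \<ge> int t" using G1 by (simp add: mult_le_cancel_left1)
    then show ?thesis unfolding t_def by linarith
  qed
  have "?P (n0 + int t * ?G)" using iter_up[of ?P, OF up n0] .
  then have "?P (n0 + int t * ?G - int (nat (n0 + int t * ?G - N)))" using iter_down[of ?P, OF down] by blast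
  then show "?P N" using ge by simp
qed

end
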